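(* Let $M\ge1$, let $k\in\mathfrak{L}_M$, set $u=\min\{\mathbb{1},\tilde{k}\}$, and let $b\in\mathbb{Z}^{M+1}$ with $u\leq b\leq\min\{k,\tilde{k}\}$. Then \[ \#\left\{\mathsf{p}\in\mathsf{S}_M\,|\,(\kappa(\mathsf{p}),\beta(\mathsf{p}))=(k,b)\right\}=\binom{k}{b}\binom{\tilde{k}-u}{b-u}. \]
   Context: Fix depths $z_{-1}<z_0<\cdots<z_M$. A (reflection) scattering sequence is a finite sequence $\mathsf{p}=(\mathsf{p}_0,\ldots,\mathsf{p}_L)$ with $L\geq 2$, $\mathsf{p}_0=\mathsf{p}_L=z_{-1}$, $\mathsf{p}_i\in\{z_0,\ldots,z_M\}$ for $1\le i\le L-1$, and for every $0\le i\le L-1$ there is $-1\le j\le M-1$ with $\{\mathsf{p}_i,\mathsf{p}_{i+1}\}=\{z_j,z_{j+1}\}$; $\mathsf{S}_M$ is the set of these. For $0\le n\le M$, $k_n$ is the number of maximal runs of consecutive indices $i$ with $\mathsf{p}_i\in\{z_n,\ldots,z_M\}$, and $b_n$ the number of those runs of length at least 2; $\kappa(\mathsf{p})=(k_0,\ldots,k_M)$, $\beta(\mathsf{p})=(b_0,\ldots,b_M)$. $\mathfrak{L}_M=\{(k_0,\ldots,k_M)\in\mathbb{Z}_{\ge0}^{M+1}: k_0=1\text{ and for all }n\le M-1,\ k_n=0\Rightarrow k_{n+1}=0\}$. Notation: $\tilde{k}=(k_1,\ldots,k_M,0)$; $\mathbb{1}=(1,\ldots,1)$; $\min$, $\le$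 and subtraction entrywise; $\binom{x}{y}=\prod_{n=0}^M\binom{x_n}{y_n}$. *)

theory Defs
  imports Complex_Main
begin

text \<open>Depths z(-1) < z 0 < ... < z M are given by a function z :: int => real,
strictly increasing on {-1..M}. A scattering sequence is a list p = [p_0,...,p_L].\<close>

definition scat_seqs :: "(int \<Rightarrow> real) \<Rightarrow> nat \<Rightarrow> real list set" where
  "scat_seqs z M = {p. \<exists>L. length p = Suc L \<and> L \<ge> 2 \<and>
      p ! 0 = z (-1) \<and> p ! L = z (-1) \<and>
      (\<forall>i. 1 \<le> i \<and> i \<le> L - 1 \<longrightarrow> p ! i \<in> z ` {0..int M}) \<and>
      (\<forall>i<L. \<exists>j\<in>{-1..int M - 1}. {p ! i, p ! Suc i} = {z j, z (j + 1)}) }"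

definition runs_count :: "nat \<Rightarrow> (nat \<Rightarrow> bool) \<Rightarrow> nat \<Rightarrow> nat" where
  "runs_count m P L = card {(a, b). a \<le> b \<and> b \<le> L \<and> b - a + 1 \<ge> m \<and>
      (\<forall>i\<in>{a..b}. P i) \<and> (a = 0 \<or> \<not> P (a - 1)) \<and> (b = L \<or> \<not> P (Suc b))}"

definition kappa :: "(int \<Rightarrow> real) \<Rightarrow> nat \<Rightarrow> real list \<Rightarrow> nat \<Rightarrow> nat" where
  "kappa z M p n = runs_count 1 (\<lambda>i. p ! i \<in> z ` {int n..int M}) (length p - 1)"

definition beta :: "(int \<Rightarrow> real) \<Rightarrow> nat \<Rightarrow> real list \<Rightarrow> nat \<Rightarrow> nat" where
  "beta z M p n = runs_count 2 (\<lambda>i. p ! i \<in> z ` {int n..int M}) (length p - 1)"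

text \<open>The set L_M, with vectors (k_0,...,k_M) represented as functions on {0..M}.\<close>
definition frakL :: "nat \<Rightarrow> (nat \<Rightarrow> nat) \<Rightarrow> bool" where
  "frakL M k \<longleftrightarrow> k 0 = 1 \<and> (\<forall>n<M. k n = 0 \<longrightarrow> k (Suc n) = 0)"

definition ktilde :: "nat \<Rightarrow> (nat \<Rightarrow> nat) \<Rightarrow> nat \<Rightarrow> nat" where
  "ktilde M k n = (if n < M then k (Suc n) else 0)"

end

theory Submission
  imports Defs
begin



definition Rs :: "nat \<Rightarrow> nat \<Rightarrow> nat \<Rightarrow> nat list set" where
  "Rs c s b = {r. length r = c \<and> sum_list r = s \<and> length (filter (\<lambda>x. x \<noteq> 0) r) = b}"

definition Ps :: "nat \<Rightarrow> nat \<Rightarrow> nat list set" where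
  "Ps s b = {r. length r = b \<and> sum_list r = s \<and> 0 \<notin> set r}"

lemma finite_Rs: "finite (Rs c s b)"
proof -
  have "Rs c s b \<subseteq> {xs. set xs \<subseteq> {..s} \<and> length xs = c}"
    by (auto simp: Rs_def intro: member_le_sum_list)
  thus ?thesis by (rule finite_subset) (simp add: finite_lists_length_eq)
qed

lemma finite_Ps: "finite (Ps s b)"
proof -
  have "Ps s b \<subseteq> {xs. set xs \<subseteq> {..s} \<and> length xs = b}"
    by (auto simp: Ps_def intro: member_le_sum_list)
  thus ?thesis by (rule finite_subset) (simp add: finite_lists_length_eq)
qed

lemma Ps_Suc: "Ps s (Suc b) = (\<Union>i<s. (#) (s - i) ` Ps i b)"
proof (rule set_eqI, rule iffI)
  fix r assume "r \<in> Ps s (Suc b)"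
  then obtain x r' where r: "r = x # r'" and h: "length r' = b" "x + sum_list r' = s" "x \<noteq> 0" "0 \<notin> set r'"
    by (cases r) (auto simp: Ps_def)
  have lt: "sum_list r' < s" using h by simp
  have "r' \<in> Ps (sum_list r') b" using h by (simp add: Ps_def)
  moreover have "r = (s - sum_list r') # r'" using h r by simp
  ultimately show "r \<in> (\<Union>i<s. (#) (s - i) ` Ps i b)" using lt by blast
next
  fix r assume "r \<in> (\<Union>i<s. (#) (s - i) ` Ps i b)"
  then obtain i r' where "i < s" "r' \<in> Ps i b" "r = (s - i) # r'" by blast
  then show "r \<in> Ps s (Suc b)" by (simp add: Ps_def)
qed

lemma card_Ps_Suc: "card (Ps s (Suc b)) = (\<Sum>i<s. card (Ps i b))"
proof -
  have "card (Ps s (Suc b)) = (\<Sum>i<s. card ((#) (s - i) ` Ps i b))"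
    unfolding Ps_Suc
    by (rule card_UN_disjoint) (auto simp: finite_Ps)
  also have "\<dots> = (\<Sum>i<s. card (Ps i b))"
    by (rule sum.cong) (auto simp: card_image)
  finally show ?thesis .
qed

lemma Ps_0: "Ps s 0 = (if s = 0 then {[]} else {})"
  by (auto simp: Ps_def)

definition Pf :: "nat \<Rightarrow> nat \<Rightarrow> nat" where
  "Pf s b = (if s = 0 then (if b = 0 then 1 else 0) else if b = 0 then 0 else (s - 1) choose (b - 1))"

lemma Pf_sum: "(\<Sum>i<s. Pf i b) = Pf s (Suc b)"
proof (induction s)
  case 0 then show ?case by (simp add: Pf_def)
next
  case (Suc s)
  then show ?case
    by (cases s; cases b) (auto simp: Pf_def)
qed

lemma card_Ps: "card (Ps s b) = Pf s b"
proof (induction b arbitrary: s)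
  case 0 then show ?case by (simp add: Ps_0 Pf_def)
next
  case (Suc b)
  then show ?case by (simp add: card_Ps_Suc Pf_sum)
qed

lemma Rs_0: "Rs 0 s b = (if s = 0 \<and> b = 0 then {[]} else {})"
  by (auto simp: Rs_def)

lemma Rs_b0: "Rs c s 0 = (if s = 0 then {replicate c 0} else {})"
proof -
  have "r \<in> Rs c s 0 \<longleftrightarrow> s = 0 \<and> r = replicate c 0" for r
  proof
    assume "r \<in> Rs c s 0"
    then have a: "length r = c" "sum_list r = s" "\<forall>x\<in>set r. x = 0"
      by (auto simp: Rs_def filter_empty_conv)
    then have "r = replicate c 0" by (intro replicate_eqI) auto
    moreover have "sum_list r = 0" using a(3) by (simp add: sum_list_eq_0_iff)
    ultimately show "s = 0 \<and> r = replicate c 0" using a(2) by blast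
  next
    assume "s = 0 \<and> r = replicate c 0"
    then show "r \<in> Rs c s 0" by (simp add: Rs_def)
  qed
  thus ?thesis by (intro set_eqI) simp
qed

lemma Rs_Suc: "Rs (Suc c) s (Suc b) = (#) 0 ` Rs c s (Suc b) \<union> (\<Union>i<s. (#) (s - i) ` Rs c i b)"
proof (rule set_eqI, rule iffI)
  fix r assume "r \<in> Rs (Suc c) s (Suc b)"
  then obtain x r' where r: "r = x # r'" and h: "length r' = c" "x + sum_list r' = s"
     "length (filter (\<lambda>x. x \<noteq> 0) (x # r')) = Suc b"
    by (cases r) (auto simp: Rs_def)
  show "r \<in> (#) 0 ` Rs c s (Suc b) \<union> (\<Union>i<s. (#) (s - i) ` Rs c i b)"
  proof (cases "x = 0")
    case True
    then have "r' \<in> Rs c s (Suc b)" using h by (simp add: Rs_def)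
    then show ?thesis using r True by blast
  next
    case False
    have lt: "sum_list r' < s" using h False by simp
    have "r' \<in> Rs c (sum_list r') b" using h False by (simp add: Rs_def)
    moreover have "r = (s - sum_list r') # r'" using h r by simp
    ultimately show ?thesis using lt by blast
  qed
next
  fix r assume "r \<in> (#) 0 ` Rs c s (Suc b) \<union> (\<Union>i<s. (#) (s - i) ` Rs c i b)"
  then show "r \<in> Rs (Suc c) s (Suc b)"
  proof
    assume "r \<in> (#) 0 ` Rs c s (Suc b)"
    then show ?thesis by (auto simp: Rs_def)
  next
    assume "r \<in> (\<Union>i<s. (#) (s - i) ` Rs c i b)"
    then obtain i r' where "i < s" "r' \<in> Rs c i b" "r = (s - i) # r'" by blast
    then show ?thesis by (simp add: Rs_def)
  qed
qed

lemma card_Rs_Suc: "card (Rs (Suc c) s (Suc b)) = card (Rs c s (Suc b)) + (\<Sum>i<s. card (Rs c i b))"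
proof -
  have "card (Rs (Suc c) s (Suc b)) = card ((#) 0 ` Rs c s (Suc b)) + card (\<Union>i<s. (#) (s - i) ` Rs c i b)"
    unfolding Rs_Suc
    by (rule card_Un_disjoint) (auto simp: finite_Rs)
  also have "card (\<Union>i<s. (#) (s - i) ` Rs c i b) = (\<Sum>i<s. card ((#) (s - i) ` Rs c i b))"
    by (rule card_UN_disjoint) (auto simp: finite_Rs)
  also have "\<dots> = (\<Sum>i<s. card (Rs c i b))"
    by (rule sum.cong) (auto simp: card_image)
  finally show ?thesis by (simp add: card_image)
qed

lemma card_Rs: "card (Rs c s b) = (c choose b) * Pf s b"
proof (induction c arbitrary: s b)
  case 0 then show ?case by (cases b) (auto simp: Rs_0 Pf_def)
next
  case (Suc c)
  show ?case
  proof (cases b)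
    case 0 then show ?thesis by (simp add: Rs_b0 Pf_def)
  next
    case (Suc b')
    have "card (Rs (Suc c) s (Suc b')) = (c choose Suc b') * Pf s (Suc b') + (\<Sum>i<s. (c choose b') * Pf i b')"
      by (simp add: card_Rs_Suc Suc.IH)
    also have "\<dots> = (Suc c choose Suc b') * Pf s (Suc b')"
      by (simp add: sum_distrib_left[symmetric] Pf_sum algebra_simps)
    finally show ?thesis using Suc by simp
  qed
qed




datatype tree = Node (children: "tree list")

definition kids :: "tree list \<Rightarrow> tree list" where "kids f = concat (map children f)"

fun prof :: "tree list \<Rightarrow> nat \<Rightarrow> nat" where
  "prof f 0 = length f" | "prof f (Suc n) = prof (kids f) n"

fun nl :: "tree list \<Rightarrow> nat \<Rightarrow> nat" where
  "nl f 0 = length (filter (\<lambda>t. children t \<noteq> []) f)" | "nl f (Suc n) = nl (kids f) n"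

fun bnd :: "nat \<Rightarrow> tree \<Rightarrow> bool" where
  "bnd 0 t = (children t = [])" | "bnd (Suc m) t = (\<forall>c\<in>set (children t). bnd m c)"

definition Af :: "nat \<Rightarrow> (nat \<Rightarrow> nat) \<Rightarrow> (nat \<Rightarrow> nat) \<Rightarrow> tree list set" where
  "Af M k b = {f. (\<forall>t\<in>set f. bnd M t) \<and> (\<forall>n\<le>M. prof f n = k n \<and> nl f n = b n)}"

fun splt :: "nat list \<Rightarrow> 'a list \<Rightarrow> 'a list list" where
  "splt [] g = []" | "splt (r#rs) g = take r g # splt rs (drop r g)"

lemma concat_splt: "sum_list rs = length g \<Longrightarrow> concat (splt rs g) = g"
  by (induction rs arbitrary: g) auto

lemma map_length_splt: "sum_list rs = length g \<Longrightarrow> map length (splt rs g) = rs"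
  by (induction rs arbitrary: g) (auto simp: min_def)

lemma splt_inv: "splt (map length xss) (concat xss) = xss"
  by (induction xss) auto

definition Psi :: "tree list \<Rightarrow> nat list \<times> tree list" where
  "Psi f = (map (\<lambda>t. length (children t)) f, kids f)"

lemma inj_Psi: "inj Psi"
proof (rule injI)
  fix f1 f2 assume "Psi f1 = Psi f2"
  then have a: "map length (map children f1) = map length (map children f2)"
    and b: "concat (map children f1) = concat (map children f2)"
    by (auto simp: Psi_def kids_def comp_def)
  have "map children f1 = map children f2"
    by (metis a b splt_inv)
  then have "map Node (map children f1) = map Node (map children f2)" by simp
  then show "f1 = f2" by (simp add: comp_def)
qed

lemma all_le_Suc: "(\<forall>n\<le>Suc m. P n) = (P 0 \<and> (\<forall>n\<le>m. P (Suc n)))"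
proof
  assume "\<forall>n\<le>Suc m. P n" then show "P 0 \<and> (\<forall>n\<le>m. P (Suc n))" by auto
next
  assume h: "P 0 \<and> (\<forall>n\<le>m. P (Suc n))"
  show "\<forall>n\<le>Suc m. P n"
  proof (intro allI impI)
    fix n assume "n \<le> Suc m" then show "P n" using h by (cases n) auto
  qed
qed

lemma sum_children: "sum_list (map (\<lambda>t. length (children t)) f) = length (kids f)"
  by (simp add: kids_def length_concat comp_def)

lemma filter_children: "length (filter (\<lambda>x. x \<noteq> 0) (map (\<lambda>t. length (children t)) f)) = length (filter (\<lambda>t. children t \<noteq> []) f)"
  by (simp add: filter_map comp_def)

lemma Psi_splt:
  assumes "sum_list r = length g"
  shows "Psi (map Node (splt r g)) = (r, g)"
  using map_length_splt[OF assms] concat_splt[OF assms] by (simp add: Psi_def kids_def comp_def)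

lemma Rs_map: "map (\<lambda>t. length (children t)) f \<in> Rs c s b \<longleftrightarrow>
   length f = c \<and> length (kids f) = s \<and> length (filter (\<lambda>t. children t \<noteq> []) f) = b"
  by (simp only: Rs_def mem_Collect_eq length_map sum_children filter_children)

lemma image_Suc: "Psi ` Af (Suc m) k b = Rs (k 0) (k 1) (b 0) \<times> Af m (\<lambda>n. k (Suc n)) (\<lambda>n. b (Suc n))"
proof (rule set_eqI, rule iffI)
  fix x assume "x \<in> Psi ` Af (Suc m) k b"
  then obtain f where x: "x = Psi f" and f: "f \<in> Af (Suc m) k b" by blast
  then have bf: "\<forall>t\<in>set f. bnd (Suc m) t" and sf: "\<forall>n\<le>Suc m. prof f n = k n \<and> nl f n = b n"
    by (auto simp: Af_def)
  have "map (\<lambda>t. length (children t)) f \<in> Rs (k 0) (k 1) (b 0)"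
    using sf[rule_format, of 0] sf[rule_format, of 1] 
    unfolding Rs_map by simp
  moreover have "kids f \<in> Af m (\<lambda>n. k (Suc n)) (\<lambda>n. b (Suc n))"
  proof -
    have "\<forall>c\<in>set (kids f). bnd m c" using bf by (auto simp: kids_def)
    moreover have "\<forall>n\<le>m. prof (kids f) n = k (Suc n) \<and> nl (kids f) n = b (Suc n)"
      using sf by auto
    ultimately show ?thesis by (simp add: Af_def)
  qed
  ultimately show "x \<in> Rs (k 0) (k 1) (b 0) \<times> Af m (\<lambda>n. k (Suc n)) (\<lambda>n. b (Suc n))"
    by (simp add: x Psi_def)
next
  fix x assume "x \<in> Rs (k 0) (k 1) (b 0) \<times> Af m (\<lambda>n. k (Suc n)) (\<lambda>n. b (Suc n))"
  then obtain r g where x: "x = (r, g)" and r: "r \<in> Rs (k 0) (k 1) (b 0)"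
    and g: "g \<in> Af m (\<lambda>n. k (Suc n)) (\<lambda>n. b (Suc n))" by blast
  have bg: "\<forall>c\<in>set g. bnd m c" and sg: "\<forall>n\<le>m. prof g n = k (Suc n) \<and> nl g n = b (Suc n)"
    using g by (auto simp: Af_def)
  have sl: "sum_list r = length g" using r sg[rule_format, of 0] by (simp add: Rs_def)
  define f where "f = map Node (splt r g)"
  have P: "Psi f = (r, g)" unfolding f_def using sl by (rule Psi_splt)
  then have rf: "r = map (\<lambda>t. length (children t)) f" and kf: "kids f = g"
    by (auto simp: Psi_def)
  have "\<forall>t\<in>set f. bnd (Suc m) t"
  proof
    fix t assume "t \<in> set f"
    then have "\<forall>c\<in>set (children t). c \<in> set (kids f)" by (auto simp: kids_def)
    then show "bnd (Suc m) t" using bg kf by auto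
  qed
  moreover have "\<forall>n\<le>Suc m. prof f n = k n \<and> nl f n = b n"
    unfolding all_le_Suc
  proof
    show "prof f 0 = k 0 \<and> nl f 0 = b 0"
      using r unfolding rf Rs_map by simp
    show "\<forall>n\<le>m. prof f (Suc n) = k (Suc n) \<and> nl f (Suc n) = b (Suc n)"
      using sg kf by simp
  qed
  ultimately have "f \<in> Af (Suc m) k b" by (simp add: Af_def)
  then show "x \<in> Psi ` Af (Suc m) k b" using P x by force
qed

lemma image_0: "Psi ` Af 0 k b = Rs (k 0) 0 (b 0) \<times> ({[]} :: tree list set)"
proof (rule set_eqI, rule iffI)
  fix x assume "x \<in> Psi ` Af 0 k b"
  then obtain f where x: "x = Psi f" and f: "f \<in> Af 0 k b" by blast
  then have bf: "\<forall>t\<in>set f. children t = []" and sf: "prof f 0 = k 0 \<and> nl f 0 = b 0"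
    by (auto simp: Af_def)
  have kf: "kids f = []" using bf by (simp add: kids_def)
  have "map (\<lambda>t. length (children t)) f \<in> Rs (k 0) 0 (b 0)"
    using sf kf bf unfolding Rs_map by (simp add: filter_False)
  then show "x \<in> Rs (k 0) 0 (b 0) \<times> {[]}" by (simp add: x Psi_def kf)
next
  fix x assume "x \<in> Rs (k 0) 0 (b 0) \<times> ({[]} :: tree list set)"
  then obtain r where x: "x = (r, [])" and r: "r \<in> Rs (k 0) 0 (b 0)" by blast
  have sl: "sum_list r = length ([]::tree list)" using r by (simp add: Rs_def)
  define f where "f = map Node (splt r [])"
  have P: "Psi f = (r, [])" unfolding f_def using sl by (rule Psi_splt)
  then have rf: "r = map (\<lambda>t. length (children t)) f" and kf: "kids f = []"
    by (auto simp: Psi_def)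
  have "\<forall>t\<in>set f. bnd 0 t" using kf by (simp add: kids_def)
  moreover have "prof f 0 = k 0 \<and> nl f 0 = b 0"
    using r unfolding rf Rs_map by simp
  ultimately have "f \<in> Af 0 k b" by (simp add: Af_def)
  then show "x \<in> Psi ` Af 0 k b" using P x by force
qed

lemma forest_count:
  "finite (Af M k b) \<and> card (Af M k b) = (\<Prod>n\<le>M. card (Rs (k n) (ktilde M k n) (b n)))"
proof (induction M arbitrary: k b)
  case 0
  have "finite (Psi ` Af 0 k b)" unfolding image_0 by (simp add: finite_Rs)
  then have fin: "finite (Af 0 k b)" using inj_Psi by (meson finite_imageD inj_on_subset subset_UNIV)
  have "card (Af 0 k b) = card (Psi ` Af 0 k b)"
    by (rule card_image[symmetric]) (meson inj_Psi inj_on_subset subset_UNIV)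
  also have "\<dots> = card (Rs (k 0) 0 (b 0))" unfolding image_0 by (simp add: card_cartesian_product)
  finally show ?case using fin by (simp add: ktilde_def)
next
  case (Suc m)
  let ?k = "\<lambda>n. k (Suc n)" and ?b = "\<lambda>n. b (Suc n)"
  have IH: "finite (Af m ?k ?b)" "card (Af m ?k ?b) = (\<Prod>n\<le>m. card (Rs (?k n) (ktilde m ?k n) (?b n)))"
    using Suc.IH by auto
  have "finite (Psi ` Af (Suc m) k b)" unfolding image_Suc using IH by (simp add: finite_Rs)
  then have fin: "finite (Af (Suc m) k b)" using inj_Psi by (meson finite_imageD inj_on_subset subset_UNIV)
  have "card (Af (Suc m) k b) = card (Psi ` Af (Suc m) k b)"
    by (rule card_image[symmetric]) (meson inj_Psi inj_on_subset subset_UNIV)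
  also have "\<dots> = card (Rs (k 0) (k 1) (b 0)) * card (Af m ?k ?b)"
    unfolding image_Suc by (simp add: card_cartesian_product)
  also have "\<dots> = (\<Prod>n\<le>Suc m. card (Rs (k n) (ktilde (Suc m) k n) (b n)))"
    by (simp add: IH prod.atMost_Suc_shift ktilde_def del: prod.atMost_Suc)
  finally show ?case using fin by simp
qed




fun flat :: "int \<Rightarrow> tree \<Rightarrow> int list" where
  "flat h (Node ts) = h # concat (map (\<lambda>c. flat (h+1) c @ [h]) ts)"

lemma flat_ge: "x \<in> set (flat h t) \<Longrightarrow> h \<le> x"
proof (induction t arbitrary: h x)
  case (Node ts)
  from Node.prems have "x = h \<or> (\<exists>c\<in>set ts. x \<in> set (flat (h+1) c))" by (auto split: if_splits)
  then show ?case
  proof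
    assume "\<exists>c\<in>set ts. x \<in> set (flat (h+1) c)"
    then obtain c where "c \<in> set ts" "x \<in> set (flat (h+1) c)" by blast
    then have "h + 1 \<le> x" by (rule Node.IH)
    then show ?thesis by simp
  qed simp
qed

lemma flat_Cons: "\<exists>W. flat h t = h # W"
  by (cases t) auto

lemma hd_flat[simp]: "hd (flat h t) = h" and flat_ne[simp]: "flat h t \<noteq> []"
  by (cases t; simp)+

lemma last_concat_h: "ts \<noteq> [] \<Longrightarrow> last (concat (map (\<lambda>c. f c @ [h]) ts)) = h"
  by (induction ts) auto

lemma last_flat[simp]: "last (flat h t) = h"
  by (cases t) (auto simp: last_concat_h)

definition adj :: "int \<Rightarrow> int \<Rightarrow> bool" where "adj x y \<longleftrightarrow> \<bar>x - y\<bar> = 1"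

lemma succ_seq:
  assumes "\<forall>c\<in>set ts. successively adj (flat (h+1) c)"
  shows "successively adj (h # concat (map (\<lambda>c. flat (h+1) c @ [h]) ts))"
  using assms
proof (induction ts)
  case Nil then show ?case by simp
next
  case (Cons c ts)
  have e: "h # concat (map (\<lambda>c. flat (h+1) c @ [h]) (c # ts)) =
      (h # flat (h+1) c) @ (h # concat (map (\<lambda>c. flat (h+1) c @ [h]) ts))" by simp
  have s1: "successively adj (h # flat (h+1) c)"
    using Cons.prems flat_Cons[of "h+1" c] by (auto simp: adj_def)
  show ?case unfolding e successively_append_iff
    using s1 Cons by (auto simp: adj_def)
qed

lemma flat_succ: "successively adj (flat h t)"
proof (induction t arbitrary: h)
  case (Node ts)
  then show ?case using succ_seq[of ts h] by simp
qed

lemma bnd_flat: "bnd M t \<longleftrightarrow> (\<forall>x\<in>set (flat h t). x \<le> h + int M)"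
proof (induction t arbitrary: h M)
  case (Node ts)
  show ?case
  proof (cases M)
    case 0
    have "(\<forall>x\<in>set (flat h (Node ts)). x \<le> h) \<longleftrightarrow> ts = []"
    proof
      assume a: "\<forall>x\<in>set (flat h (Node ts)). x \<le> h"
      show "ts = []"
      proof (rule ccontr)
        assume "ts \<noteq> []"
        then obtain c where "c \<in> set ts" by (cases ts) auto
        then have "h + 1 \<in> set (flat h (Node ts))" using flat_Cons[of "h+1" c] by force
        then show False using a by fastforce
      qed
    qed simp
    then show ?thesis using 0 by simp
  next
    case (Suc m)
    have "bnd M (Node ts) \<longleftrightarrow> (\<forall>c\<in>set ts. \<forall>x\<in>set (flat (h+1) c). x \<le> h + 1 + int m)"
      using Node.IH Suc by simp
    also have "\<dots> \<longleftrightarrow> (\<forall>x\<in>set (flat h (Node ts)). x \<le> h + int M)"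
      using Suc by (auto simp: add.assoc)
    finally show ?thesis .
  qed
qed

lemma app_split:
  fixes h :: int shows "\<forall>a\<in>set A. h < a \<Longrightarrow> \<forall>b\<in>set B. h < b \<Longrightarrow> A @ h # X = B @ h # Y \<Longrightarrow> A = B \<and> X = Y"
proof (induction A arbitrary: B)
  case Nil
  show ?case
  proof (cases B)
    case Nil then show ?thesis using Nil.prems by simp
  next
    case (Cons b B')
    then have "h = b" using Nil.prems(3) by simp
    moreover have "h < b" using Nil.prems(2) Cons by simp
    ultimately show ?thesis by simp
  qed
next
  case (Cons a A)
  show ?case
  proof (cases B)
    case Nil
    then have "h = a" using Cons.prems(3) by simp
    moreover have "h < a" using Cons.prems(1) by simp
    ultimately show ?thesis by simp
  next
    case (Cons b B')
    then have "a = b" "A @ h # X = B' @ h # Y" using Cons.prems(3) by simp_all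
    moreover have "A = B' \<and> X = Y" using Cons.IH Cons.prems(1,2) calculation(2) \<open>B = b # B'\<close> by simp
    ultimately show ?thesis using \<open>B = b # B'\<close> by simp
  qed
qed

lemma flat_inj: "flat h t1 = flat h t2 \<Longrightarrow> t1 = t2"
proof (induction t1 arbitrary: h t2)
  case (Node ts1)
  obtain ts2 where t2: "t2 = Node ts2" by (cases t2)
  have IH: "\<forall>t\<in>set ts1. \<forall>t'. flat (h+1) t = flat (h+1) t' \<longrightarrow> t = t'"
    using Node.IH by blast
  have "concat (map (\<lambda>c. flat (h+1) c @ [h]) ts1) = concat (map (\<lambda>c. flat (h+1) c @ [h]) ts2)"
    using Node.prems t2 by simp
  then have "ts1 = ts2" using IH
  proof (induction ts1 arbitrary: ts2)
    case Nil then show ?case by (cases ts2) auto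
  next
    case (Cons c ts1)
    then obtain c' ts2' where ts2: "ts2 = c' # ts2'" by (cases ts2) auto
    have "flat (h+1) c @ h # concat (map (\<lambda>c. flat (h+1) c @ [h]) ts1) =
          flat (h+1) c' @ h # concat (map (\<lambda>c. flat (h+1) c @ [h]) ts2')"
      using Cons.prems(1) ts2 by simp
    moreover have "\<forall>a\<in>set (flat (h+1) c). h < a" "\<forall>a\<in>set (flat (h+1) c'). h < a"
      using flat_ge by fastforce+
    ultimately have "flat (h+1) c = flat (h+1) c'" and
      r: "concat (map (\<lambda>c. flat (h+1) c @ [h]) ts1) = concat (map (\<lambda>c. flat (h+1) c @ [h]) ts2')"
      using app_split by blast+
    then have "c = c'" using Cons.prems(2) by simp
    moreover have "ts1 = ts2'" using Cons.IH[OF r] Cons.prems(2) by simp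
    ultimately show ?case using ts2 by simp
  qed
  then show ?case using t2 by simp
qed




lemma parse:
  "ys \<noteq> [] \<Longrightarrow> hd ys = h \<Longrightarrow> last ys = h \<Longrightarrow> \<forall>x\<in>set ys. h \<le> x \<Longrightarrow> successively adj ys
   \<Longrightarrow> \<exists>t. ys = flat h t"
proof (induction "length ys" arbitrary: ys h rule: less_induct)
  case less
  obtain rest where ys: "ys = h # rest" using less.prems(1,2) by (cases ys) auto
  show ?case
  proof (cases "rest = []")
    case True then show ?thesis using ys by (intro exI[of _ "Node []"]) simp
  next
    case False
    have "last rest = h" using less.prems(3) ys False by simp
    then have hin: "h \<in> set rest" using False last_in_set by metis
    define E where "E = takeWhile (\<lambda>x. x \<noteq> h) rest"
    define R where "R = dropWhile (\<lambda>x. x \<noteq> h) rest"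
    have rest: "rest = E @ R" unfolding E_def R_def by simp
    have Rne: "R \<noteq> []" using hin unfolding R_def
      by (auto simp: dropWhile_eq_Nil_conv)
    have "hd R = h" using hd_dropWhile[of "\<lambda>x. x \<noteq> h" rest] Rne unfolding R_def by simp
    note Rne this
    then obtain R' where R: "R = h # R'" by (cases R) auto
    have sa: "successively adj (h # rest)" using less.prems(5) ys by simp
    have hr: "adj h (hd rest)" using sa False by (cases rest) auto
    have "hd rest \<ge> h" using less.prems(4) ys False by simp
    then have hdr: "hd rest = h + 1" using hr by (auto simp: adj_def)
    have Ene: "E \<noteq> []" unfolding E_def using False hdr by (cases rest) auto
    have Ege: "\<forall>x\<in>set E. h + 1 \<le> x"
    proof
      fix x assume x: "x \<in> set E"
      then have "x \<noteq> h" unfolding E_def by (blast dest: set_takeWhileD)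
      moreover have "h \<le> x" using x less.prems(4) ys rest by auto
      ultimately show "h + 1 \<le> x" by simp
    qed
    have hdE: "hd E = h + 1" using hdr rest Ene by simp
    have ys2: "ys = h # E @ h # R'" using ys rest R by simp
    have sE: "successively adj E" and aE: "adj (last E) h" and sR: "successively adj (h # R')"
    proof -
      have "successively adj ((h # E) @ (h # R'))" using less.prems(5) unfolding ys2 by simp
      then have "successively adj (h # E)" "adj (last (h # E)) h" "successively adj (h # R')"
        unfolding successively_append_iff by auto
      then show "successively adj E" "adj (last E) h" "successively adj (h # R')"
        using Ene by (auto simp: successively_Cons)
    qed
    have "last E \<in> set E" using Ene by simp
    then have lE: "last E = h + 1" using Ege aE by (fastforce simp: adj_def)
    have "length E < length ys" using ys2 by simp
    then obtain t1 where t1: "E = flat (h+1) t1"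
      using less.hyps[of E "h+1"] Ene hdE lE Ege sE by blast
    have "length (h # R') < length ys" using ys2 Ene by simp
    moreover have "last (h # R') = h" using less.prems(3) unfolding ys2 by simp
    moreover have "\<forall>x\<in>set (h # R'). h \<le> x" using less.prems(4) unfolding ys2 by simp
    ultimately obtain t2 where t2: "h # R' = flat h t2"
      using less.hyps[of "h # R'" h] sR by auto
    obtain ts where ts: "t2 = Node ts" by (cases t2)
    have "R' = concat (map (\<lambda>c. flat (h+1) c @ [h]) ts)" using t2 ts by simp
    then have "ys = flat h (Node (t1 # ts))" using ys2 t1 by simp
    then show ?thesis by blast
  qed
qed

fun c1 :: "int \<Rightarrow> int list \<Rightarrow> nat" where
  "c1 n (x # y # r) = (if x < n \<and> n \<le> y then 1 else 0) + c1 n (y # r)" | "c1 n _ = 0"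

fun c2 :: "int \<Rightarrow> int list \<Rightarrow> nat" where
  "c2 n (x # y # w # r) = (if x < n \<and> n \<le> y \<and> n \<le> w then 1 else 0) + c2 n (y # w # r)" | "c2 n _ = 0"

lemma c1_app: "c1 n (A @ y # B) = c1 n (A @ [y]) + c1 n (y # B)"
proof (induction A)
  case Nil then show ?case by simp
next
  case (Cons a A) then show ?case by (cases A) auto
qed

lemma c2_app: "c2 n (A @ y # B) = c2 n (A @ [y]) + c2 n (y # B) +
   (if A \<noteq> [] \<and> B \<noteq> [] \<and> last A < n \<and> n \<le> y \<and> n \<le> hd B then 1 else 0)"
proof (induction A)
  case Nil then show ?case by simp
next
  case (Cons a A)
  show ?case
  proof (cases A)
    case Nil then show ?thesis by (cases B) auto
  next
    case (Cons a' A')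
    then show ?thesis using Cons.IH by (cases A') auto
  qed
qed

lemma c1_zero: "\<forall>x\<in>set W. n \<le> x \<Longrightarrow> c1 n (W @ [z]) = 0"
proof (induction W)
  case Nil then show ?case by simp
next
  case (Cons a W) then show ?case by (cases W) auto
qed

lemma c2_zero: "\<forall>x\<in>set W. n \<le> x \<Longrightarrow> c2 n (W @ [z]) = 0"
proof (induction W)
  case Nil then show ?case by simp
next
  case (Cons a W)
  then show ?case
  proof (cases W)
    case (Cons b W') then show ?thesis using Cons.IH Cons.prems \<open>W = b # W'\<close> by (cases W') auto
  qed simp
qed

definition Exc :: "int \<Rightarrow> tree \<Rightarrow> int list" where "Exc h t = (h - 1) # flat h t @ [h - 1]"

lemma seq1:
  assumes "h < n" "z < n"
  shows "c1 n (h # concat (map (\<lambda>c. flat (h+1) c @ [h]) ts) @ [z]) = sum_list (map (\<lambda>c. c1 n (Exc (h+1) c)) ts)"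
proof (induction ts)
  case Nil then show ?case using assms by simp
next
  case (Cons c ts)
  have "h # concat (map (\<lambda>c. flat (h+1) c @ [h]) (c # ts)) @ [z] =
        (h # flat (h+1) c) @ h # (concat (map (\<lambda>c. flat (h+1) c @ [h]) ts) @ [z])" (is "?L = _") by simp
  then have "c1 n ?L = c1 n ((h # flat (h+1) c) @ [h]) + c1 n (h # concat (map (\<lambda>c. flat (h+1) c @ [h]) ts) @ [z])"
    using c1_app by (metis)
  then show ?case using Cons assms by (simp add: Exc_def)
qed

lemma seq2:
  assumes "h < n" "z < n"
  shows "c2 n (h # concat (map (\<lambda>c. flat (h+1) c @ [h]) ts) @ [z]) = sum_list (map (\<lambda>c. c2 n (Exc (h+1) c)) ts)"
proof (induction ts)
  case Nil then show ?case using assms by simp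
next
  case (Cons c ts)
  have "h # concat (map (\<lambda>c. flat (h+1) c @ [h]) (c # ts)) @ [z] =
        (h # flat (h+1) c) @ h # (concat (map (\<lambda>c. flat (h+1) c @ [h]) ts) @ [z])" (is "?L = _") by simp
  then have "c2 n ?L = c2 n ((h # flat (h+1) c) @ [h]) + c2 n (h # concat (map (\<lambda>c. flat (h+1) c @ [h]) ts) @ [z]) + (if (h # flat (h+1) c) \<noteq> [] \<and> (concat (map (\<lambda>c. flat (h+1) c @ [h]) ts) @ [z]) \<noteq> [] \<and> last (h # flat (h+1) c) < n \<and> n \<le> h \<and> n \<le> hd (concat (map (\<lambda>c. flat (h+1) c @ [h]) ts) @ [z]) then 1 else 0)"
    using c2_app by (metis)
  then show ?case using Cons assms by (simp add: Exc_def)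
qed

lemma prof_app: "prof (f1 @ f2) n = prof f1 n + prof f2 n"
  by (induction n arbitrary: f1 f2) (auto simp: kids_def)

lemma nl_app: "nl (f1 @ f2) n = nl f1 n + nl f2 n"
  by (induction n arbitrary: f1 f2) (auto simp: kids_def)

lemma prof_list: "prof f n = sum_list (map (\<lambda>t. prof [t] n) f)"
proof (induction f)
  case Nil then show ?case by (induction n) (auto simp: kids_def)
next
  case (Cons t f) then show ?case using prof_app[of "[t]" f n] by simp
qed

lemma nl_list: "nl f n = sum_list (map (\<lambda>t. nl [t] n) f)"
proof (induction f)
  case Nil then show ?case by (induction n) (auto simp: kids_def)
next
  case (Cons t f) then show ?case using nl_app[of "[t]" f n] by simp
qed

lemma stat:
  "c1 (h + int d) (Exc h t) = prof [t] d \<and> c2 (h + int d) (Exc h t) = nl [t] d"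
proof (induction t arbitrary: h d)
  case (Node ts)
  let ?W = "concat (map (\<lambda>c. flat (h+1) c @ [h]) ts)"
  have fl: "flat h (Node ts) = h # ?W" by simp
  have ge: "\<forall>x\<in>set (h # ?W). h \<le> x" using flat_ge[of _ h "Node ts"] fl by metis
  show ?case
  proof (cases d)
    case 0
    have e: "Exc h (Node ts) = (h - 1) # h # (?W @ [h - 1])" by (simp add: Exc_def)
    have A: "c1 h (Exc h (Node ts)) = 1"
      unfolding e using c1_zero[OF ge, of "h - 1"] by simp
    have B: "c2 h (Exc h (Node ts)) = (if ts = [] then 0 else 1)"
    proof (cases ts)
      case Nil then show ?thesis by (simp add: Exc_def)
    next
      case (Cons c ts')
      obtain V where V: "flat (h+1) c = (h+1) # V" using flat_Cons by blast
      have "hd (?W @ [h - 1]) = h + 1" using Cons V by simp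
      moreover have "?W @ [h-1] \<noteq> []" by simp
      ultimately obtain V' where "?W @ [h - 1] = (h + 1) # V'" by (cases "?W @ [h - 1]") auto
      then have "c2 h (Exc h (Node ts)) = 1 + c2 h (h # ?W @ [h - 1])"
        unfolding e by simp
      then show ?thesis using c2_zero[OF ge, of "h - 1"] Cons by simp
    qed
    show ?thesis using A B 0 by (simp add: kids_def filter_empty_conv)
  next
    case (Suc d')
    have n: "h + int d = (h + 1) + int d'" using Suc by simp
    have IH: "\<And>c. c \<in> set ts \<Longrightarrow> c1 (h + int d) (Exc (h+1) c) = prof [c] d' \<and> c2 (h + int d) (Exc (h+1) c) = nl [c] d'"
      using Node.IH n by metis
    have lt: "h < h + int d" "h - 1 < h + int d" using Suc by simp_all
    have e: "Exc h (Node ts) = (h - 1) # (h # ?W @ [h - 1])" by (simp add: Exc_def)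
    have "c1 (h + int d) (Exc h (Node ts)) = c1 (h + int d) (h # ?W @ [h - 1])"
      unfolding e using lt by simp
    also have "\<dots> = sum_list (map (\<lambda>c. c1 (h + int d) (Exc (h+1) c)) ts)"
      by (rule seq1[OF lt])
    also have "\<dots> = sum_list (map (\<lambda>c. prof [c] d') ts)"
      using IH by (intro arg_cong[where f=sum_list] map_cong) auto
    also have "\<dots> = prof [Node ts] d" using Suc prof_list[of ts d'] by (simp add: kids_def)
    finally have A: "c1 (h + int d) (Exc h (Node ts)) = prof [Node ts] d" .
    have "c2 (h + int d) (Exc h (Node ts)) = c2 (h + int d) (h # ?W @ [h - 1])"
      unfolding e using lt by (cases "?W @ [h - 1]") simp_all
    also have "\<dots> = sum_list (map (\<lambda>c. c2 (h + int d) (Exc (h+1) c)) ts)"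
      by (rule seq2[OF lt])
    also have "\<dots> = sum_list (map (\<lambda>c. nl [c] d') ts)"
      using IH by (intro arg_cong[where f=sum_list] map_cong) auto
    also have "\<dots> = nl [Node ts] d" using Suc nl_list[of ts d'] by (simp add: kids_def)
    finally show ?thesis using A by simp
  qed
qed




definition en :: "(nat \<Rightarrow> bool) \<Rightarrow> nat \<Rightarrow> nat \<Rightarrow> nat" where
  "en P L a = (LEAST b. a \<le> b \<and> (b = L \<or> \<not> P (Suc b)))"

lemma en_props:
  assumes "a \<le> L" "P a"
  shows "a \<le> en P L a" "en P L a \<le> L" "en P L a = L \<or> \<not> P (Suc (en P L a))"
    "\<forall>i\<in>{a..en P L a}. P i"
proof -
  have ex: "a \<le> L \<and> (L = L \<or> \<not> P (Suc L))" using assms by simp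
  have I: "a \<le> en P L a \<and> (en P L a = L \<or> \<not> P (Suc (en P L a)))"
    unfolding en_def by (rule LeastI[of _ L]) (rule ex)
  then show "a \<le> en P L a" "en P L a = L \<or> \<not> P (Suc (en P L a))" by auto
  show "en P L a \<le> L" unfolding en_def by (rule Least_le) (rule ex)
  show "\<forall>i\<in>{a..en P L a}. P i"
  proof
    fix i assume i: "i \<in> {a..en P L a}"
    show "P i"
    proof (rule ccontr)
      assume np: "\<not> P i"
      then have "i \<noteq> a" using assms by auto
      then have i1: "a \<le> i - 1" "i - 1 < en P L a" using i by auto
      have "Suc (i - 1) = i" using \<open>i \<noteq> a\<close> i by auto
      then have "a \<le> i - 1 \<and> (i - 1 = L \<or> \<not> P (Suc (i - 1)))" using np i1 by simp
      then have "en P L a \<le> i - 1" unfolding en_def by (rule Least_le)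
      then show False using i1 by simp
    qed
  qed
qed

lemma en_unique:
  assumes "a \<le> b" "b \<le> L" "\<forall>i\<in>{a..b}. P i" "b = L \<or> \<not> P (Suc b)"
  shows "b = en P L a"
proof -
  have pa: "P a" using assms by auto
  have le: "en P L a \<le> b" unfolding en_def by (rule Least_le) (use assms in auto)
  show ?thesis
  proof (rule ccontr)
    assume "b \<noteq> en P L a"
    then have lt: "en P L a < b" using le by simp
    then have "en P L a \<noteq> L" using assms(2) by simp
    then have "\<not> P (Suc (en P L a))" using en_props(3)[of a L P] assms by auto
    moreover have "Suc (en P L a) \<in> {a..b}" using lt en_props(1)[of a L P] pa assms by auto
    ultimately show False using assms(3) by blast
  qed
qed

lemma rc:
  "runs_count m P L = card {a. a \<le> L \<and> P a \<and> (a = 0 \<or> \<not> P (a - 1)) \<and> m \<le> en P L a - a + 1}"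
proof -
  let ?T = "{a. a \<le> L \<and> P a \<and> (a = 0 \<or> \<not> P (a - 1)) \<and> m \<le> en P L a - a + 1}"
  let ?S = "{(a, b). a \<le> b \<and> b \<le> L \<and> b - a + 1 \<ge> m \<and>
      (\<forall>i\<in>{a..b}. P i) \<and> (a = 0 \<or> \<not> P (a - 1)) \<and> (b = L \<or> \<not> P (Suc b))}"
  have "?S = (\<lambda>a. (a, en P L a)) ` ?T"
  proof (rule set_eqI, rule iffI)
    fix x assume "x \<in> ?S"
    then obtain a b where x: "x = (a, b)" and h: "a \<le> b" "b \<le> L" "b - a + 1 \<ge> m"
      "\<forall>i\<in>{a..b}. P i" "a = 0 \<or> \<not> P (a - 1)" "b = L \<or> \<not> P (Suc b)" by blast
    have b: "b = en P L a" using en_unique[OF h(1,2,4,6)] .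
    have "a \<in> ?T" using h b by auto
    then show "x \<in> (\<lambda>a. (a, en P L a)) ` ?T" using x b by blast
  next
    fix x assume "x \<in> (\<lambda>a. (a, en P L a)) ` ?T"
    then obtain a where x: "x = (a, en P L a)" and a: "a \<in> ?T" by blast
    then have "a \<le> L" "P a" by auto
    note E = en_props[of a L P, OF this]
    show "x \<in> ?S" using a E x by auto
  qed
  moreover have "inj_on (\<lambda>a. (a, en P L a)) ?T" by (rule inj_onI) simp
  ultimately show ?thesis unfolding runs_count_def by (simp add: card_image)
qed

lemma rc1: "runs_count 1 P L = card {a. a \<le> L \<and> P a \<and> (a = 0 \<or> \<not> P (a - 1))}"
  unfolding rc by simp

lemma rc2: "runs_count 2 P L = card {a. a < L \<and> P a \<and> P (Suc a) \<and> (a = 0 \<or> \<not> P (a - 1))}"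
  unfolding rc
proof (rule arg_cong[where f=card], rule Collect_cong)
  fix a
  show "(a \<le> L \<and> P a \<and> (a = 0 \<or> \<not> P (a - 1)) \<and> 2 \<le> en P L a - a + 1) =
        (a < L \<and> P a \<and> P (Suc a) \<and> (a = 0 \<or> \<not> P (a - 1)))"
  proof (cases "a \<le> L \<and> P a")
    case True
    note E = en_props[of a L P, OF True[THEN conjunct1] True[THEN conjunct2]]
    have "en P L a \<noteq> a \<longleftrightarrow> a < L \<and> P (Suc a)"
    proof
      assume ne: "en P L a \<noteq> a"
      show "a < L \<and> P (Suc a)"
      proof (rule ccontr)
        assume "\<not> (a < L \<and> P (Suc a))"
        then have "a \<le> a \<and> (a = L \<or> \<not> P (Suc a))" using True by auto
        then have "en P L a \<le> a" unfolding en_def by (rule Least_le)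
        then show False using ne E(1) by simp
      qed
    next
      assume h: "a < L \<and> P (Suc a)"
      show "en P L a \<noteq> a" using E(3) h by auto
    qed
    then show ?thesis using True E(1) by auto
  next
    case False then show ?thesis by auto
  qed
qed

lemma card_Suc_split:
  assumes "finite {i. P (Suc i)}"
  shows "card {i. P i} = (if P 0 then 1 else 0) + card {i. P (Suc i)}"
proof -
  have e: "{i. P i} = (if P 0 then {0} else {}) \<union> Suc ` {i. P (Suc i)}"
  proof (rule set_eqI)
    fix i show "i \<in> {i. P i} \<longleftrightarrow> i \<in> (if P 0 then {0} else {}) \<union> Suc ` {i. P (Suc i)}"
      by (cases i) auto
  qed
  have fin2: "finite (Suc ` {i. P (Suc i)})" using assms by simp
  show ?thesis
  proof (cases "P 0")
    case True
    then have "{i. P i} = insert 0 (Suc ` {i. P (Suc i)})" using e by simp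
    then show ?thesis using True fin2 by (simp add: card_image)
  next
    case False
    then have "{i. P i} = Suc ` {i. P (Suc i)}" using e by simp
    then show ?thesis using False by (simp add: card_image)
  qed
qed

lemma c1_idx: "c1 n xs = card {i. Suc i < length xs \<and> xs ! i < n \<and> n \<le> xs ! Suc i}"
proof (induction n xs rule: c1.induct)
  case (1 n x y r)
  have fin: "finite {i. Suc (Suc i) < length (x # y # r)}" by simp
  have "card {i. Suc i < length (x # y # r) \<and> (x # y # r) ! i < n \<and> n \<le> (x # y # r) ! Suc i}
    = (if x < n \<and> n \<le> y then 1 else 0) + card {i. Suc i < length (y # r) \<and> (y # r) ! i < n \<and> n \<le> (y # r) ! Suc i}"
    by (subst card_Suc_split) (auto intro: finite_subset[OF _ fin])
  then show ?case using 1 by simp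
qed auto

lemma c2_idx: "c2 n xs = card {i. Suc (Suc i) < length xs \<and> xs ! i < n \<and> n \<le> xs ! Suc i \<and> n \<le> xs ! Suc (Suc i)}"
proof (induction n xs rule: c2.induct)
  case (1 n x y w r)
  have fin: "finite {i. Suc (Suc i) < length (x # y # w # r)}" by simp
  have "card {i. Suc (Suc i) < length (x # y # w # r) \<and> (x # y # w # r) ! i < n \<and> n \<le> (x # y # w # r) ! Suc i \<and> n \<le> (x # y # w # r) ! Suc (Suc i)}
    = (if x < n \<and> n \<le> y \<and> n \<le> w then 1 else 0) + card {i. Suc (Suc i) < length (y # w # r) \<and> (y # w # r) ! i < n \<and> n \<le> (y # w # r) ! Suc i \<and> n \<le> (y # w # r) ! Suc (Suc i)}"
    by (subst card_Suc_split) (auto intro: finite_subset[OF _ fin])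
  then show ?case using 1 by simp
qed auto




lemma stats_z:
  fixes z :: "int \<Rightarrow> real"
  assumes inj: "inj_on z {-1..int M}" and bt: "bnd M t" and nM: "n \<le> M"
  shows "kappa z M (map z (Exc 0 t)) n = prof [t] n \<and> beta z M (map z (Exc 0 t)) n = nl [t] n"
proof -
  define xs where "xs = Exc 0 t"
  define F where "F = flat 0 t"
  have xsF: "xs = (-1) # F @ [-1]" by (simp add: xs_def F_def Exc_def)
  have Fr: "\<forall>x\<in>set F. 0 \<le> x \<and> x \<le> int M"
    using flat_ge[of _ 0 t] bnd_flat[of M t 0] bt by (auto simp: F_def)
  have setxs: "set xs \<subseteq> {-1..int M}" using Fr xsF by auto
  define L where "L = length xs - 1"
  have Lx: "length xs = Suc L" by (simp add: L_def xsF)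
  have x0: "xs ! 0 = -1" by (simp add: xsF)
  define P where "P = (\<lambda>i. map z xs ! i \<in> z ` {int n..int M})"
  have PQ: "P i \<longleftrightarrow> int n \<le> xs ! i" if "i \<le> L" for i
  proof -
    have "i < length xs" using that Lx by simp
    then have "xs ! i \<in> set xs" by (rule nth_mem)
    then have xi: "xs ! i \<in> {-1..int M}" using setxs by blast
    have "P i \<longleftrightarrow> z (xs ! i) \<in> z ` {int n..int M}" using that Lx by (simp add: P_def)
    also have "\<dots> \<longleftrightarrow> xs ! i \<in> {int n..int M}" by (rule inj_on_image_mem_iff[OF inj xi]) auto
    also have "\<dots> \<longleftrightarrow> int n \<le> xs ! i" using xi by auto
    finally show ?thesis .
  qed
  let ?I1 = "{i. Suc i < length xs \<and> xs ! i < int n \<and> int n \<le> xs ! Suc i}"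
  let ?I2 = "{i. Suc (Suc i) < length xs \<and> xs ! i < int n \<and> int n \<le> xs ! Suc i \<and> int n \<le> xs ! Suc (Suc i)}"
  have k1: "kappa z M (map z xs) n = runs_count 1 P L" by (simp add: kappa_def P_def L_def)
  have b1: "beta z M (map z xs) n = runs_count 2 P L" by (simp add: beta_def P_def L_def)
  have e1: "{a. a \<le> L \<and> P a \<and> (a = 0 \<or> \<not> P (a - 1))} = Suc ` ?I1"
  proof (rule set_eqI, rule iffI)
    fix a assume a: "a \<in> {a. a \<le> L \<and> P a \<and> (a = 0 \<or> \<not> P (a - 1))}"
    have np0: "\<not> P 0" using PQ[of 0] x0 by simp
    have "a \<noteq> 0" using a np0 by (cases a) auto
    then obtain i where i: "a = Suc i" by (cases a) auto
    then show "a \<in> Suc ` ?I1" using a PQ[of i] PQ[of "Suc i"] Lx by auto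
  next
    fix a assume "a \<in> Suc ` ?I1"
    then obtain i where i: "a = Suc i" "i \<in> ?I1" by blast
    then show "a \<in> {a. a \<le> L \<and> P a \<and> (a = 0 \<or> \<not> P (a - 1))}"
      using PQ[of i] PQ[of "Suc i"] Lx by auto
  qed
  have e2: "{a. a < L \<and> P a \<and> P (Suc a) \<and> (a = 0 \<or> \<not> P (a - 1))} = Suc ` ?I2"
  proof (rule set_eqI, rule iffI)
    fix a assume a: "a \<in> {a. a < L \<and> P a \<and> P (Suc a) \<and> (a = 0 \<or> \<not> P (a - 1))}"
    have np0: "\<not> P 0" using PQ[of 0] x0 by simp
    have "a \<noteq> 0" using a np0 by (cases a) auto
    then obtain i where i: "a = Suc i" by (cases a) auto
    then show "a \<in> Suc ` ?I2" using a PQ[of i] PQ[of "Suc i"] PQ[of "Suc (Suc i)"] Lx by auto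
  next
    fix a assume "a \<in> Suc ` ?I2"
    then obtain i where i: "a = Suc i" "i \<in> ?I2" by blast
    then show "a \<in> {a. a < L \<and> P a \<and> P (Suc a) \<and> (a = 0 \<or> \<not> P (a - 1))}"
      using PQ[of i] PQ[of "Suc i"] PQ[of "Suc (Suc i)"] Lx by auto
  qed
  have "kappa z M (map z xs) n = c1 (int n) xs"
    unfolding k1 rc1 e1 c1_idx by (simp add: card_image)
  moreover have "beta z M (map z xs) n = c2 (int n) xs"
    unfolding b1 rc2 e2 c2_idx by (simp add: card_image)
  moreover have "c1 (int n) xs = prof [t] n \<and> c2 (int n) xs = nl [t] n"
    using stat[of 0 n t] by (simp add: xs_def)
  ultimately show ?thesis by (simp add: xs_def)
qed

lemma succ_Ex: "successively adj (Exc 0 t)"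
proof -
  have s: "successively adj (flat 0 t)" by (rule flat_succ)
  have a1: "adj (last (flat 0 t)) (0 - 1)" by (simp add: adj_def)
  have "successively adj (flat 0 t @ [0 - 1])"
    unfolding successively_append_iff using s a1 by simp
  moreover have "adj (0 - 1) (hd (flat 0 t @ [0 - 1]))" by (simp add: adj_def)
  ultimately have "successively adj ((0 - 1) # flat 0 t @ [0 - 1])"
    by (simp add: successively_Cons del: diff_0)
  then show ?thesis by (simp add: Exc_def del: diff_0)
qed

lemma scat_mem:
  fixes z :: "int \<Rightarrow> real"
  assumes inj: "inj_on z {-1..int M}" and bt: "bnd M t"
  shows "map z (Exc 0 t) \<in> scat_seqs z M"
proof -
  define xs where "xs = Exc 0 t"
  define F where "F = flat 0 t"
  have xsF: "xs = (-1) # F @ [-1]" by (simp add: xs_def F_def Exc_def)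
  have Fne: "F \<noteq> []" by (simp add: F_def)
  have Fr: "\<forall>x\<in>set F. 0 \<le> x \<and> x \<le> int M"
    using flat_ge[of _ 0 t] bnd_flat[of M t 0] bt by (auto simp: F_def)
  have setxs: "set xs \<subseteq> {-1..int M}" using Fr xsF by auto
  define L where "L = Suc (length F)"
  have Lx: "length xs = Suc L" by (simp add: L_def xsF)
  have sx: "successively adj xs" unfolding xs_def by (rule succ_Ex)
  let ?p = "map z xs"
  have "length ?p = Suc L" using Lx by simp
  moreover have "2 \<le> L" using Fne by (simp add: L_def) (cases F; simp)
  moreover have "?p ! 0 = z (-1)" by (simp add: xsF)
  moreover have "?p ! L = z (-1)" by (simp add: xsF L_def nth_append)
  moreover have "\<forall>i. 1 \<le> i \<and> i \<le> L - 1 \<longrightarrow> ?p ! i \<in> z ` {0..int M}"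
  proof (intro allI impI)
    fix i assume i: "1 \<le> i \<and> i \<le> L - 1"
    then have "xs ! i = F ! (i - 1)" using xsF L_def
      by (cases i) (auto simp: nth_append)
    moreover have "F ! (i - 1) \<in> set F" using i L_def by auto
    ultimately have "xs ! i \<in> {0..int M}" using Fr by auto
    then show "?p ! i \<in> z ` {0..int M}" using i Lx by auto
  qed
  moreover have "\<forall>i<L. \<exists>j\<in>{-1..int M - 1}. {?p ! i, ?p ! Suc i} = {z j, z (j + 1)}"
  proof (intro allI impI)
    fix i assume i: "i < L"
    have a: "adj (xs ! i) (xs ! Suc i)" using successively_nth[OF sx] i Lx by simp
    have "i < length xs" "Suc i < length xs" using i Lx by simp_all
    then have "xs ! i \<in> set xs" "xs ! Suc i \<in> set xs" by simp_all
    then have v1: "xs ! i \<in> {-1..int M}" "xs ! Suc i \<in> {-1..int M}" using setxs by blast+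
    show "\<exists>j\<in>{-1..int M - 1}. {?p ! i, ?p ! Suc i} = {z j, z (j + 1)}"
    proof (cases "xs ! i < xs ! Suc i")
      case True
      then have "xs ! Suc i = xs ! i + 1" using a by (auto simp: adj_def)
      then show ?thesis using v1 i Lx by (intro bexI[of _ "xs ! i"]) auto
    next
      case False
      then have "xs ! i = xs ! Suc i + 1" using a by (auto simp: adj_def)
      then show ?thesis using v1 i Lx by (intro bexI[of _ "xs ! Suc i"]) auto
    qed
  qed
  ultimately show ?thesis unfolding scat_seqs_def xs_def by blast
qed

lemma scat_parse:
  fixes z :: "int \<Rightarrow> real"
  assumes p: "p \<in> scat_seqs z M" and inj: "inj_on z {-1..int M}"
  shows "\<exists>t. bnd M t \<and> p = map z (Exc 0 t)"
proof -
  let ?V = "{-1..int M}"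
  obtain L where L: "length p = Suc L" "L \<ge> 2" "p ! 0 = z (-1)" "p ! L = z (-1)"
    "\<forall>i. 1 \<le> i \<and> i \<le> L - 1 \<longrightarrow> p ! i \<in> z ` {0..int M}"
    "\<forall>i<L. \<exists>j\<in>{-1..int M - 1}. {p ! i, p ! Suc i} = {z j, z (j + 1)}"
    using p unfolding scat_seqs_def by blast
  have pV: "p ! i \<in> z ` ?V" if "i \<le> L" for i
  proof (cases "i = 0 \<or> i = L")
    case True then show ?thesis using L by auto
  next
    case False then have "1 \<le> i \<and> i \<le> L - 1" using that by auto
    then show ?thesis using L(5) by auto
  qed
  define g where "g = inv_into ?V z"
  define xs where "xs = map g p"
  have gz: "g (z w) = w" if "w \<in> ?V" for w unfolding g_def by (rule inv_into_f_f[OF inj that])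
  have pz: "map z xs = p"
  proof -
    have "\<forall>x\<in>set p. z (g x) = x"
    proof
      fix x assume "x \<in> set p"
      then obtain i where "i < length p" "x = p ! i" by (auto simp: in_set_conv_nth)
      then have "x \<in> z ` ?V" using pV L(1) by auto
      then show "z (g x) = x" unfolding g_def by (rule f_inv_into_f)
    qed
    then show ?thesis by (simp add: xs_def map_idI)
  qed
  have lx: "length xs = Suc L" using L(1) by (simp add: xs_def)
  have xn: "xs ! i = g (p ! i)" if "i \<le> L" for i using that L(1) by (simp add: xs_def)
  have x0: "xs ! 0 = -1" using xn[of 0] L(3) gz[of "-1"] by simp
  have xL: "xs ! L = -1" using xn[of L] L(4) gz[of "-1"] by simp
  have xint: "xs ! i \<in> {0..int M}" if i1: "1 \<le> i" and i2: "i \<le> L - 1" for i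
  proof -
    have "p ! i \<in> z ` {0..int M}" using L(5) i1 i2 by blast
    then obtain w where w: "w \<in> {0..int M}" "p ! i = z w" by blast
    then show ?thesis using xn[of i] gz[of w] i1 i2 L(2) by auto
  qed
  have xadj: "adj (xs ! i) (xs ! Suc i)" if iL: "i < L" for i
  proof -
    obtain j where j: "j \<in> {-1..int M - 1}" "{p ! i, p ! Suc i} = {z j, z (j + 1)}" using L(6) iL by blast
    have jV: "j \<in> ?V" "j + 1 \<in> ?V" using j by auto
    from j(2) have "(p ! i = z j \<and> p ! Suc i = z (j+1)) \<or> (p ! i = z (j+1) \<and> p ! Suc i = z j)"
      by (auto simp: doubleton_eq_iff)
    then show ?thesis using xn[of i] xn[of "Suc i"] iL gz[OF jV(1)] gz[OF jV(2)]
      by (auto simp: adj_def)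
  qed
  have sx: "successively adj xs" unfolding successively_conv_nth using xadj lx by auto
  have xne: "xs \<noteq> []" using lx by auto
  have tne: "tl xs \<noteq> []" using lx L(2) by (cases xs) auto
  define ys where "ys = butlast (tl xs)"
  have "xs = hd xs # tl xs" using xne by simp
  moreover have "tl xs = ys @ [last (tl xs)]" using tne by (simp add: ys_def)
  moreover have "hd xs = -1" using x0 xne by (simp add: hd_conv_nth)
  moreover have "last (tl xs) = -1"
  proof -
    have "last (tl xs) = last xs" using tne by (simp add: last_tl)
    also have "\<dots> = xs ! L" using xne lx by (simp add: last_conv_nth)
    finally show ?thesis using xL by simp
  qed
  ultimately have xys: "xs = (-1) # ys @ [-1]" by simp
  have lys: "length ys = L - 1" using lx xys by simp
  have yn: "ys ! j = xs ! Suc j" if "j < length ys" for j using that xys by (simp add: nth_append)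
  have ysr: "\<forall>x\<in>set ys. 0 \<le> x \<and> x \<le> int M"
  proof
    fix x assume "x \<in> set ys"
    then obtain j where "j < length ys" "x = ys ! j" by (auto simp: in_set_conv_nth)
    then show "0 \<le> x \<and> x \<le> int M" using yn xint[of "Suc j"] lys by auto
  qed
  have yne: "ys \<noteq> []" using lys L(2) by auto
  have sc: "successively adj ((-1) # (ys @ [-1]))" using sx xys by simp
  then have "adj (-1) (hd (ys @ [-1]))" and s2: "successively adj (ys @ [-1])"
    by (simp_all add: successively_Cons)
  then have s1: "adj (-1) (hd ys)" using yne by simp
  from s2 have sy: "successively adj ys" and s3: "adj (last ys) (-1)"
    using yne by (simp_all add: successively_append_iff)
  have "hd ys \<in> set ys" "last ys \<in> set ys" using yne by auto
  then have hy: "hd ys = 0" and ly: "last ys = 0" using s1 s3 ysr by (auto simp: adj_def)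
  obtain t where t: "ys = flat 0 t" using parse[OF yne hy ly _ sy] ysr by auto
  have "bnd M t" using bnd_flat[of M t 0] ysr t by simp
  moreover have "p = map z (Exc 0 t)" using pz xys t by (simp add: Exc_def)
  ultimately show ?thesis by blast
qed




theorem lemma2:
  fixes z :: "int \<Rightarrow> real" and M :: nat and k :: "nat \<Rightarrow> nat" and b :: "nat \<Rightarrow> int"
  assumes "strict_mono_on {-1..int M} z"
    and "M \<ge> 1"
    and "frakL M k"
    and "\<forall>n\<le>M. int (min 1 (ktilde M k n)) \<le> b n \<and>
                b n \<le> int (min (k n) (ktilde M k n))"
  shows "finite {p \<in> scat_seqs z M. \<forall>n\<le>M. kappa z M p n = k n \<and> int (beta z M p n) = b n} \<and>
         card {p \<in> scat_seqs z M. \<forall>n\<le>M. kappa z M p n = k n \<and> int (beta z M p n) = b n}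
         = (\<Prod>n\<le>M. (k n choose nat (b n)) *
              ((ktilde M k n - min 1 (ktilde M k n)) choose nat (b n - int (min 1 (ktilde M k n)))))"
proof -
  have inj: "inj_on z {-1..int M}" using assms(1) by (rule strict_mono_on_imp_inj_on)
  define b' where "b' = (\<lambda>n. nat (b n))"
  have bnn: "\<forall>n\<le>M. 0 \<le> b n" using assms(4) by (meson dual_order.trans of_nat_0_le_iff)
  have bb: "\<forall>n\<le>M. int (b' n) = b n" using bnn by (simp add: b'_def)
  have k0: "k 0 = 1" using assms(3) by (simp add: frakL_def)
  define Phi where "Phi = (\<lambda>t. map z (Exc 0 t))"
  define Tg where "Tg = {p \<in> scat_seqs z M. \<forall>n\<le>M. kappa z M p n = k n \<and> int (beta z M p n) = b n}"
  define TT where "TT = (\<lambda>t. [t]) -` Af M k b'"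
  have TTb: "bnd M t" if "t \<in> TT" for t using that by (simp add: TT_def Af_def)
  have Tg_eq: "Tg = Phi ` TT"
  proof (rule set_eqI, rule iffI)
    fix p assume p: "p \<in> Tg"
    then obtain t where t: "bnd M t" "p = Phi t" using scat_parse[OF _ inj] by (auto simp: Tg_def Phi_def)
    have "\<forall>n\<le>M. prof [t] n = k n \<and> nl [t] n = b' n"
    proof (intro allI impI)
      fix n assume n: "n \<le> M"
      have "kappa z M p n = k n \<and> int (beta z M p n) = b n" using p n by (simp add: Tg_def)
      then show "prof [t] n = k n \<and> nl [t] n = b' n"
        using stats_z[OF inj t(1) n] t(2) bb n unfolding Phi_def by auto
    qed
    then have "t \<in> TT" using t by (simp add: TT_def Af_def)
    then show "p \<in> Phi ` TT" using t by blast
  next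
    fix p assume "p \<in> Phi ` TT"
    then obtain t where t: "t \<in> TT" "p = Phi t" by blast
    have bt: "bnd M t" using TTb t(1) .
    have "p \<in> scat_seqs z M" using scat_mem[OF inj bt] t by (simp add: Phi_def)
    moreover have "\<forall>n\<le>M. kappa z M p n = k n \<and> int (beta z M p n) = b n"
    proof (intro allI impI)
      fix n assume n: "n \<le> M"
      have "prof [t] n = k n \<and> nl [t] n = b' n" using t(1) n by (simp add: TT_def Af_def)
      then show "kappa z M p n = k n \<and> int (beta z M p n) = b n"
        using stats_z[OF inj bt n] t(2) bb n unfolding Phi_def by auto
    qed
    ultimately show "p \<in> Tg" by (simp add: Tg_def)
  qed
  have injPhi: "inj_on Phi TT"
  proof (rule inj_onI)
    fix t1 t2 assume t: "t1 \<in> TT" "t2 \<in> TT" "Phi t1 = Phi t2"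
    have sub: "set (Exc 0 t) \<subseteq> {-1..int M}" if "bnd M t" for t
      using flat_ge[of _ 0 t] bnd_flat[of M t 0] that by (force simp: Exc_def)
    have "Exc 0 t1 = Exc 0 t2"
      using t(3) unfolding Phi_def
      by (rule map_inj_on) (use sub[OF TTb[OF t(1)]] sub[OF TTb[OF t(2)]] in \<open>auto intro: inj_on_subset[OF inj]\<close>)
    then have "flat 0 t1 = flat 0 t2" by (simp add: Exc_def)
    then show "t1 = t2" by (rule flat_inj)
  qed
  have AF: "finite (Af M k b')" "card (Af M k b') = (\<Prod>n\<le>M. card (Rs (k n) (ktilde M k n) (b' n)))"
    using forest_count by auto
  have injs: "inj (\<lambda>t::tree. [t])" by (simp add: inj_def)
  have fTT: "finite TT" unfolding TT_def using AF(1) injs by (rule finite_vimageI)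
  have rng: "Af M k b' \<subseteq> range (\<lambda>t. [t])"
  proof
    fix f assume "f \<in> Af M k b'"
    then have "length f = 1" using k0 by (auto simp: Af_def)
    then obtain t where "f = [t]" by (metis One_nat_def length_0_conv length_Suc_conv)
    then show "f \<in> range (\<lambda>t. [t])" by blast
  qed
  have cTT: "card TT = card (Af M k b')" unfolding TT_def using injs rng by (rule card_vimage_inj)
  have fin: "finite Tg" using Tg_eq fTT by simp
  have "card Tg = card TT" using Tg_eq injPhi by (simp add: card_image)
  also have "\<dots> = (\<Prod>n\<le>M. (k n choose b' n) * Pf (ktilde M k n) (b' n))"
    using cTT AF(2) by (simp add: card_Rs)
  also have "\<dots> = (\<Prod>n\<le>M. (k n choose nat (b n)) *
              ((ktilde M k n - min 1 (ktilde M k n)) choose nat (b n - int (min 1 (ktilde M k n)))))"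
  proof (rule prod.cong)
    fix n assume "n \<in> {..M}"
    then have n: "n \<le> M" by simp
    have h: "int (min 1 (ktilde M k n)) \<le> b n" "b n \<le> int (min (k n) (ktilde M k n))"
      using assms(4) n by auto
    show "(k n choose b' n) * Pf (ktilde M k n) (b' n) = (k n choose nat (b n)) *
              ((ktilde M k n - min 1 (ktilde M k n)) choose nat (b n - int (min 1 (ktilde M k n))))"
    proof (cases "ktilde M k n = 0")
      case True
      then have "b n = 0" using h by simp
      then show ?thesis using True by (simp add: b'_def Pf_def)
    next
      case False
      then have "1 \<le> b n" using h by simp
      then have "nat (b n - 1) = nat (b n) - 1" "nat (b n) \<noteq> 0" by auto
      then show ?thesis using False by (simp add: b'_def Pf_def)
    qed
  qed simp
  finally show ?thesis using fin unfolding Tg_def by simp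
qed


end
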